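(* Let $n\geqslant 2$, $P=\mathcal F(\Delta^{n-1})$, and $D$ a diagram on $P^*$ with values in finite sets whose associated sheaf $\mathcal D$ is inhabited and flabby. Let $I_0\in P$ satisfy $|D(I_0)|\geqslant 2$ and $|D(J)|=1$ for every nonempty $J\subsetneq I_0$. Write $D(I_0)=A_1\sqcup A_2$ with $A_1,A_2\neq\emptyset$. For $\varepsilon\in\{1,2\}$ define $D_\varepsilon(J)=D(J\geqslant I_0)^{-1}(A_\varepsilon)$ if $J\supseteq I_0$, and $D_\varepsilon(J)=D(J)$ otherwise, with structure maps the restrictions of those of $D$ (so $D_\varepsilon$ is a subdiagram of $D$). Then the sheaves $\mathcal D_1,\mathcal D_2$ associated to $D_1,D_2$ are inhabited and flabby.
   Context: $\mathcal F(\Delta^{n-1})$ is the poset of nonempty subsets of $[n]$ ordered by inclusion; $P^*$ is its reverse. A diagram on $P^*$ assigns finite sets $D(I)$ and maps $D(J\geqslant I)\colon D(J)\to D(I)$ for $I\subseteq J$, functorially. Open sets of the Alexandrov space $X_{P^*}$ are the lower ideals of $P$ (i.e. simplicial subcomplexes of $\Delta^{n-1}$). The associated sheaf assigns to nonempty open $U$ the set $\mathcal D(U)=\{(v_I)_{I\in U}\in\prod_{I\in U}D(I): D(J\geqslant I)(v_J)=v_I\text{ for } I\subseteq J \text{ in }U\}$ with projection restrictions. Inhabited: $\mathcal D(U)\neq\emptyset$ for all nonempty open $U$; flabby: every restriction map $\mathcal D(U)\to\mathcal D(V)$, $\emptyset\neq V\subseteq U$ open, is surjective. *)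

theory Defs
  imports "HOL-Library.FuncSet"
begin

text \<open>Face poset of the simplex on [n] = {1..n}: nonempty subsets of [n].\<close>
definition faces :: "nat \<Rightarrow> nat set set" where
  "faces n = {I. I \<subseteq> {1..n} \<and> I \<noteq> {}}"

definition is_diagram :: "nat \<Rightarrow> (nat set \<Rightarrow> 'a set) \<Rightarrow> (nat set \<Rightarrow> nat set \<Rightarrow> 'a \<Rightarrow> 'a) \<Rightarrow> bool" where
  "is_diagram n D Dm \<longleftrightarrow>
     (\<forall>I\<in>faces n. \<forall>J\<in>faces n. I \<subseteq> J \<longrightarrow> (\<forall>x\<in>D J. Dm J I x \<in> D I)) \<and>
     (\<forall>I\<in>faces n. \<forall>x\<in>D I. Dm I I x = x) \<and>
     (\<forall>I\<in>faces n. \<forall>J\<in>faces n. \<forall>K\<in>faces n. I \<subseteq> J \<longrightarrow> J \<subseteq> K \<longrightarrow>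
        (\<forall>x\<in>D K. Dm K I x = Dm J I (Dm K J x)))"

text \<open>Open sets of the Alexandrov space X_{P^*}: lower ideals of P.\<close>
definition open_faces :: "nat \<Rightarrow> nat set set \<Rightarrow> bool" where
  "open_faces n U \<longleftrightarrow> U \<subseteq> faces n \<and>
     (\<forall>J\<in>U. \<forall>I. I \<noteq> {} \<longrightarrow> I \<subseteq> J \<longrightarrow> I \<in> U)"

text \<open>Sections of the associated sheaf over U (compatible families, extensional outside U).\<close>
definition sections :: "(nat set \<Rightarrow> 'a set) \<Rightarrow> (nat set \<Rightarrow> nat set \<Rightarrow> 'a \<Rightarrow> 'a) \<Rightarrow> nat set set
    \<Rightarrow> (nat set \<Rightarrow> 'a) set" where
  "sections D Dm U = {v \<in> (\<Pi>\<^sub>E I\<in>U. D I). \<forall>I\<in>U. \<forall>J\<in>U. I \<subseteq> J \<longrightarrow> Dm J I (v J) = v I}"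

definition inhabited :: "nat \<Rightarrow> (nat set \<Rightarrow> 'a set) \<Rightarrow> (nat set \<Rightarrow> nat set \<Rightarrow> 'a \<Rightarrow> 'a) \<Rightarrow> bool" where
  "inhabited n D Dm \<longleftrightarrow> (\<forall>U. open_faces n U \<longrightarrow> U \<noteq> {} \<longrightarrow> sections D Dm U \<noteq> {})"

definition flabby :: "nat \<Rightarrow> (nat set \<Rightarrow> 'a set) \<Rightarrow> (nat set \<Rightarrow> nat set \<Rightarrow> 'a \<Rightarrow> 'a) \<Rightarrow> bool" where
  "flabby n D Dm \<longleftrightarrow> (\<forall>U V. open_faces n U \<longrightarrow> open_faces n V \<longrightarrow> V \<noteq> {} \<longrightarrow> V \<subseteq> U \<longrightarrow>
      (\<lambda>v. restrict v V) ` sections D Dm U = sections D Dm V)"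

definition subdiag :: "(nat set \<Rightarrow> 'a set) \<Rightarrow> (nat set \<Rightarrow> nat set \<Rightarrow> 'a \<Rightarrow> 'a) \<Rightarrow> nat set \<Rightarrow> 'a set
    \<Rightarrow> nat set \<Rightarrow> 'a set" where
  "subdiag D Dm I0 A J = (if I0 \<subseteq> J then {x \<in> D J. Dm J I0 x \<in> A} else D J)"

end

theory Submission
  imports Defs
begin
lemma diag_map: "is_diagram n D Dm \<Longrightarrow> I \<in> faces n \<Longrightarrow> J \<in> faces n \<Longrightarrow> I \<subseteq> J \<Longrightarrow> x \<in> D J \<Longrightarrow> Dm J I x \<in> D I"
  unfolding is_diagram_def by blast
lemma diag_id: "is_diagram n D Dm \<Longrightarrow> I \<in> faces n \<Longrightarrow> x \<in> D I \<Longrightarrow> Dm I I x = x"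
  unfolding is_diagram_def by blast
lemma diag_comp: "is_diagram n D Dm \<Longrightarrow> I \<in> faces n \<Longrightarrow> J \<in> faces n \<Longrightarrow> K \<in> faces n \<Longrightarrow> I \<subseteq> J \<Longrightarrow> J \<subseteq> K \<Longrightarrow> x \<in> D K \<Longrightarrow> Dm K I x = Dm J I (Dm K J x)"
  unfolding is_diagram_def by blast
lemma sec_mem: "v \<in> sections D Dm U \<Longrightarrow> J \<in> U \<Longrightarrow> v J \<in> D J"
  unfolding sections_def by blast
lemma sec_comp: "v \<in> sections D Dm U \<Longrightarrow> I \<in> U \<Longrightarrow> J \<in> U \<Longrightarrow> I \<subseteq> J \<Longrightarrow> Dm J I (v J) = v I"
  unfolding sections_def by blast
lemma sec_ext: "v \<in> sections D Dm U \<Longrightarrow> J \<notin> U \<Longrightarrow> v J = undefined"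
  unfolding sections_def by blast
lemma secI: "(\<And>J. J \<in> U \<Longrightarrow> v J \<in> D J) \<Longrightarrow> (\<And>J. J \<notin> U \<Longrightarrow> v J = undefined)
  \<Longrightarrow> (\<And>I J. I \<in> U \<Longrightarrow> J \<in> U \<Longrightarrow> I \<subseteq> J \<Longrightarrow> Dm J I (v J) = v I) \<Longrightarrow> v \<in> sections D Dm U"
  unfolding sections_def by blast

lemma sub_sections_in:
  assumes "open_faces n U" "I0 \<in> U" "is_diagram n D Dm"
  shows "v \<in> sections (subdiag D Dm I0 A) Dm U \<longleftrightarrow> v \<in> sections D Dm U \<and> v I0 \<in> A"
proof
  assume v: "v \<in> sections (subdiag D Dm I0 A) Dm U"
  have sub: "\<And>J. subdiag D Dm I0 A J \<subseteq> D J" unfolding subdiag_def by auto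
  have vD: "v \<in> sections D Dm U"
    by (rule secI) (use sub sec_mem[OF v] sec_ext[OF v] sec_comp[OF v] in blast)+
  have I0f: "I0 \<in> faces n" using assms unfolding open_faces_def by blast
  have "v I0 \<in> subdiag D Dm I0 A I0" using sec_mem[OF v assms(2)] .
  then have "v I0 \<in> D I0" "Dm I0 I0 (v I0) \<in> A" unfolding subdiag_def by auto
  then show "v \<in> sections D Dm U \<and> v I0 \<in> A" using vD diag_id[OF assms(3) I0f] by simp
next
  assume v: "v \<in> sections D Dm U \<and> v I0 \<in> A"
  show "v \<in> sections (subdiag D Dm I0 A) Dm U"
  proof (rule secI)
    fix J assume J: "J \<in> U"
    have vJ: "v J \<in> D J" using v J sec_mem by blast
    show "v J \<in> subdiag D Dm I0 A J"
    proof (cases "I0 \<subseteq> J")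
      case True
      then have "Dm J I0 (v J) = v I0" using v J assms(2) sec_comp by blast
      then show ?thesis using True v vJ unfolding subdiag_def by simp
    next
      case False then show ?thesis using vJ unfolding subdiag_def by simp
    qed
  qed (use v sec_ext sec_comp in blast)+
qed
lemma uniq1: "card X = 1 \<Longrightarrow> x \<in> X \<Longrightarrow> y \<in> X \<Longrightarrow> x = y"
  by (metis card_1_singletonE singletonD)

lemma extension:
  assumes diag: "is_diagram n D Dm" and fl: "flabby n D Dm"
    and I0: "I0 \<in> faces n"
    and one: "\<forall>J. J \<noteq> {} \<longrightarrow> J \<subset> I0 \<longrightarrow> card (D J) = 1"
    and U: "open_faces n U" and I0U: "I0 \<in> U"
    and V: "open_faces n V" "V \<subseteq> U" "I0 \<notin> V"
    and v: "v \<in> sections D Dm V" and a: "a \<in> D I0"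
  shows "\<exists>u\<in>sections D Dm U. restrict u V = v \<and> u I0 = a"
proof -
  define L where "L = {J. J \<noteq> {} \<and> J \<subseteq> I0}"
  define W where "W = V \<union> L"
  define w where "w = (\<lambda>J. if J \<in> V then v J else if J \<in> L then Dm I0 J a else undefined)"
  have I0f: "I0 \<subseteq> {1..n}" "I0 \<noteq> {}" using I0 unfolding faces_def by auto
  have Lf: "L \<subseteq> faces n" using I0f unfolding L_def faces_def by auto
  have Vf: "V \<subseteq> faces n" and Vl: "\<And>I J. J \<in> V \<Longrightarrow> I \<noteq> {} \<Longrightarrow> I \<subseteq> J \<Longrightarrow> I \<in> V"
    using V(1) unfolding open_faces_def by blast+
  have Uf: "U \<subseteq> faces n" and Ul: "\<And>I J. J \<in> U \<Longrightarrow> I \<noteq> {} \<Longrightarrow> I \<subseteq> J \<Longrightarrow> I \<in> U"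
    using U unfolding open_faces_def by blast+
  have Wf: "W \<subseteq> faces n" using Vf Lf unfolding W_def by blast
  have Wo: "open_faces n W" unfolding open_faces_def
  proof (intro conjI ballI allI impI)
    show "W \<subseteq> faces n" by (rule Wf)
  next
    fix J I assume "J \<in> W" "I \<noteq> {}" "I \<subseteq> J"
    then show "I \<in> W" using Vl unfolding W_def L_def by blast
  qed
  have LU: "L \<subseteq> U" using Ul I0U unfolding L_def by blast
  have WU: "W \<subseteq> U" using V(2) LU unfolding W_def by blast
  have I0W: "I0 \<in> W" using I0f unfolding W_def L_def by auto
  have uniq: "\<And>J x y. J \<in> L \<Longrightarrow> J \<noteq> I0 \<Longrightarrow> x \<in> D J \<Longrightarrow> y \<in> D J \<Longrightarrow> x = y"
  proof -
    fix J x y assume "J \<in> L" "J \<noteq> I0" "x \<in> D J" "y \<in> D J"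
    then have "card (D J) = 1" using one unfolding L_def by auto
    then show "x = y" using \<open>x \<in> D J\<close> \<open>y \<in> D J\<close> by (rule uniq1)
  qed
  have wmem: "\<And>J. J \<in> W \<Longrightarrow> w J \<in> D J"
  proof -
    fix J assume JW: "J \<in> W"
    show "w J \<in> D J"
    proof (cases "J \<in> V")
      case True then show ?thesis using sec_mem[OF v True] unfolding w_def by simp
    next
      case False
      then have JL: "J \<in> L" using JW unfolding W_def by auto
      then have "Dm I0 J a \<in> D J" using diag_map[OF diag _ I0 _ a] Lf unfolding L_def by blast
      then show ?thesis using False JL unfolding w_def by simp
    qed
  qed
  have ws: "w \<in> sections D Dm W"
  proof (rule secI)
    fix J assume "J \<in> W" then show "w J \<in> D J" by (rule wmem)
  next
    fix J assume "J \<notin> W" then show "w J = undefined" unfolding w_def W_def by simp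
  next
    fix I J assume IW: "I \<in> W" and JW: "J \<in> W" and IJ: "I \<subseteq> J"
    have If: "I \<in> faces n" "J \<in> faces n" using IW JW Wf by blast+
    have Ine: "I \<noteq> {}" using If unfolding faces_def by blast
    show "Dm J I (w J) = w I"
    proof (cases "J \<in> V")
      case True
      then have IV: "I \<in> V" using Vl Ine IJ by blast
      have "Dm J I (v J) = v I" using sec_comp[OF v IV True IJ] .
      then show ?thesis using True IV unfolding w_def by simp
    next
      case False
      then have JL: "J \<in> L" using JW unfolding W_def by auto
      then have IL: "I \<in> L" using Ine IJ unfolding L_def by auto
      show ?thesis
      proof (cases "I \<in> V")
        case True
        then have "I \<noteq> I0" using V(3) by auto
        moreover have "Dm J I (w J) \<in> D I" using diag_map[OF diag If IJ wmem[OF JW]] .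
        moreover have "w I \<in> D I" using wmem IW by auto
        ultimately show ?thesis using uniq IL by blast
      next
        case IV: False
        have JI0: "J \<subseteq> I0" using JL unfolding L_def by blast
        have "Dm I0 I a = Dm J I (Dm I0 J a)"
          using diag_comp[OF diag If I0 IJ JI0 a] .
        then show ?thesis using False IV IL JL unfolding w_def by simp
      qed
    qed
  qed
  have "(\<lambda>v. restrict v W) ` sections D Dm U = sections D Dm W"
    using fl Wo U WU I0W unfolding flabby_def by blast
  then obtain u where u: "u \<in> sections D Dm U" "restrict u W = w" using ws by (metis imageE)
  have "restrict u V = v"
  proof
    fix J show "restrict u V J = v J"
    proof (cases "J \<in> V")
      case True
      then have "J \<in> W" unfolding W_def by blast
      then have "u J = w J" using u(2) by (metis restrict_apply')
      then show ?thesis using True unfolding w_def by simp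
    next
      case False then show ?thesis using sec_ext[OF v False] by simp
    qed
  qed
  moreover have "u I0 = a"
  proof -
    have "u I0 = w I0" using u(2) I0W by (metis restrict_apply')
    moreover have "I0 \<in> L" using I0f unfolding L_def by blast
    ultimately show ?thesis using V(3) diag_id[OF diag I0 a] unfolding w_def by simp
  qed
  ultimately show ?thesis using u by blast
qed

lemma restr_sections:
  assumes "u \<in> sections E Dm U" "V \<subseteq> U"
  shows "restrict u V \<in> sections E Dm V"
  using assms unfolding sections_def by (auto simp: subset_iff)

lemma sub_sections_notin:
  assumes "open_faces n U" "I0 \<notin> U" "I0 \<noteq> {}"
  shows "sections (subdiag D Dm I0 A) Dm U = sections D Dm U"
proof -
  have "\<And>J. J \<in> U \<Longrightarrow> subdiag D Dm I0 A J = D J"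
    using assms unfolding open_faces_def subdiag_def by auto
  then have "(\<Pi>\<^sub>E I\<in>U. subdiag D Dm I0 A I) = (\<Pi>\<^sub>E I\<in>U. D I)" by (rule PiE_cong)
  then show ?thesis unfolding sections_def by simp
qed

lemma main:
  assumes diag: "is_diagram n D Dm" and inh: "inhabited n D Dm" and fl: "flabby n D Dm"
    and I0: "I0 \<in> faces n"
    and one: "\<forall>J. J \<noteq> {} \<longrightarrow> J \<subset> I0 \<longrightarrow> card (D J) = 1"
    and A: "A \<subseteq> D I0" "A \<noteq> {}"
  shows "inhabited n (subdiag D Dm I0 A) Dm \<and> flabby n (subdiag D Dm I0 A) Dm"
proof
  obtain a where a: "a \<in> A" using A by auto
  have aD: "a \<in> D I0" using a A by auto
  have I0ne: "I0 \<noteq> {}" using I0 unfolding faces_def by auto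
  have emp: "(\<lambda>_. undefined) \<in> sections D Dm {}" by (rule secI) auto
  have emp_o: "open_faces n {}" unfolding open_faces_def by auto
  show "inhabited n (subdiag D Dm I0 A) Dm"
    unfolding inhabited_def
  proof (intro allI impI)
    fix U assume U: "open_faces n U" "U \<noteq> {}"
    show "sections (subdiag D Dm I0 A) Dm U \<noteq> {}"
    proof (cases "I0 \<in> U")
      case True
      obtain u where "u \<in> sections D Dm U" "u I0 = a"
        using extension[OF diag fl I0 one U(1) True emp_o _ _ emp aD] by blast
      then have "u \<in> sections (subdiag D Dm I0 A) Dm U"
        using sub_sections_in[OF U(1) True diag] a by simp
      then show ?thesis by blast
    next
      case False
      have "sections D Dm U \<noteq> {}" using inh U unfolding inhabited_def by blast
      then show ?thesis using sub_sections_notin[OF U(1) False I0ne, where D=D and Dm=Dm and A=A] by simp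
    qed
  qed
  show "flabby n (subdiag D Dm I0 A) Dm"
    unfolding flabby_def
  proof (intro allI impI)
    fix U V assume U: "open_faces n U" and V: "open_faces n V" and Vne: "V \<noteq> {}" and VU: "V \<subseteq> U"
    show "(\<lambda>v. restrict v V) ` sections (subdiag D Dm I0 A) Dm U = sections (subdiag D Dm I0 A) Dm V"
    proof
      show "(\<lambda>v. restrict v V) ` sections (subdiag D Dm I0 A) Dm U \<subseteq> sections (subdiag D Dm I0 A) Dm V"
        using restr_sections[OF _ VU] by blast
    next
      have flD: "(\<lambda>v. restrict v V) ` sections D Dm U = sections D Dm V"
        using fl U V Vne VU unfolding flabby_def by blast
      show "sections (subdiag D Dm I0 A) Dm V \<subseteq> (\<lambda>v. restrict v V) ` sections (subdiag D Dm I0 A) Dm U"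
      proof
        fix v assume v: "v \<in> sections (subdiag D Dm I0 A) Dm V"
        show "v \<in> (\<lambda>v. restrict v V) ` sections (subdiag D Dm I0 A) Dm U"
        proof (cases "I0 \<in> V")
          case True
          then have I0U: "I0 \<in> U" using VU by auto
          have vD: "v \<in> sections D Dm V" "v I0 \<in> A" using sub_sections_in[OF V True diag] v by auto
          then obtain u where u: "u \<in> sections D Dm U" "restrict u V = v" using flD by (metis imageE)
          have "u I0 = v I0" using u(2) True by (metis restrict_apply')
          then have "u \<in> sections (subdiag D Dm I0 A) Dm U"
            using sub_sections_in[OF U I0U diag] u vD by simp
          then show ?thesis using u(2) by blast
        next
          case False
          have vD: "v \<in> sections D Dm V" using v sub_sections_notin[OF V False I0ne, where D=D and Dm=Dm and A=A] by simp
          show ?thesis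
          proof (cases "I0 \<in> U")
            case True
            obtain u where u: "u \<in> sections D Dm U" "restrict u V = v" "u I0 = a"
              using extension[OF diag fl I0 one U True V VU False vD aD] by blast
            then have "u \<in> sections (subdiag D Dm I0 A) Dm U"
              using sub_sections_in[OF U True diag] a by simp
            then show ?thesis using u(2) by blast
          next
            case F2: False
            have "v \<in> (\<lambda>v. restrict v V) ` sections D Dm U" using flD vD by simp
            then show ?thesis using sub_sections_notin[OF U F2 I0ne, where D=D and Dm=Dm and A=A] by simp
          qed
        qed
      qed
    qed
  qed
qed

theorem lemma6p2:
  fixes n :: nat and D :: "nat set \<Rightarrow> 'a set" and Dm :: "nat set \<Rightarrow> nat set \<Rightarrow> 'a \<Rightarrow> 'a"
    and I0 :: "nat set" and A1 A2 :: "'a set"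
  assumes "n \<ge> 2"
    and "is_diagram n D Dm"
    and "\<forall>I\<in>faces n. finite (D I)"
    and "inhabited n D Dm" and "flabby n D Dm"
    and "I0 \<in> faces n"
    and "card (D I0) \<ge> 2"
    and "\<forall>J. J \<noteq> {} \<longrightarrow> J \<subset> I0 \<longrightarrow> card (D J) = 1"
    and "D I0 = A1 \<union> A2" and "A1 \<inter> A2 = {}" and "A1 \<noteq> {}" and "A2 \<noteq> {}"
  shows "inhabited n (subdiag D Dm I0 A1) Dm \<and> flabby n (subdiag D Dm I0 A1) Dm \<and>
         inhabited n (subdiag D Dm I0 A2) Dm \<and> flabby n (subdiag D Dm I0 A2) Dm"
proof -
  have 1: "A1 \<subseteq> D I0" "A2 \<subseteq> D I0" using assms(9) by auto
  show ?thesis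
    using main[OF assms(2) assms(4) assms(5) assms(6) assms(8) 1(1) assms(11)]
      main[OF assms(2) assms(4) assms(5) assms(6) assms(8) 1(2) assms(12)] by blast
qed

end
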